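(* Let $r,m,n$ be nonnegative integers. There is a bijection between (A) the set of pairs of partitions $(\alpha,\beta)$ with $\alpha$ nonempty, $|\alpha|+|\beta|=n$, every part of $\beta$ at most $\alpha_1$, $l(\alpha)-l(\beta)=m$, and exactly $r$ balanced parts (i.e. $b(\alpha,\beta)=r$), and (B) the set of strict shifted pairs of partitions $(\bar\alpha,\bar\beta)$ with $|\bar\alpha|+|\bar\beta|=n$ and $l(\bar\alpha)-l(\bar\beta)=m+2r$. The bijection sends $(\alpha,\beta)$ to the pair where $\bar\alpha$ is the partition formed by all parts of $\alpha$ together with all balanced parts of $\beta$, and $\bar\beta$ is formed by the unbalanced parts of $\beta$.
   Context: A partition is a finite nonincreasing sequence $\lambda=(\lambda_1,\dots,\lambda_r)$ of positive integers (possibly empty); $l(\lambda)=r$, $|\lambda|=\sum\lambda_i$, $\lambda_1$ the largest part. A pair of partitions $(\alpha,\beta)$ is strict shifted if $l(\alpha)>l(\beta)$ and $\alpha_{i+1}>\beta_i$ for $1\le i\le l(\beta)$. Balanced parts: let $(\gamma,\delta)$ be a pair of partitions, with the convention $\gamma_j=0$ for $j>l(\gamma)$. The parts $\delta_1,\dots,\delta_{l(\delta)}$ are classified recursively in increasing order of index: $\delta_i$ is balanced if and only if $\gamma_{i+1}\le\delta_i$ and the number of indices $j$ with $2\le j\le l(\gamma)$ and $\gamma_j>\delta_i$ equals the number of indices $j<i$ for which $\delta_j$ is unbalanced; otherwise $\delta_i$ is unbalanced. $b(\gamma,\delta)$ denotes the number of balanced parts of $\delta$. *)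

theory Defs
  imports Main
begin

definition is_partition :: "nat list \<Rightarrow> bool" where
  "is_partition lam \<longleftrightarrow> sorted_wrt (\<ge>) lam \<and> (\<forall>x\<in>set lam. 0 < x)"

text \<open>1-indexed part with the convention gamma_j = 0 for j > l(gamma).\<close>
definition part :: "nat list \<Rightarrow> nat \<Rightarrow> nat" where
  "part g j = (if 1 \<le> j \<and> j \<le> length g then g ! (j - 1) else 0)"

definition strict_shifted :: "nat list \<Rightarrow> nat list \<Rightarrow> bool" where
  "strict_shifted a b \<longleftrightarrow> length a > length b \<and>
     (\<forall>i. 1 \<le> i \<and> i \<le> length b \<longrightarrow> part a (i + 1) > part b i)"

text \<open>balflags g ds i u: classification of the remaining parts ds of delta, where the
  first of them has (1-based) index i and u is the number of unbalanced parts with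
  smaller index. True = balanced.\<close>
fun balflags :: "nat list \<Rightarrow> nat list \<Rightarrow> nat \<Rightarrow> nat \<Rightarrow> bool list" where
  "balflags g [] i u = []"
| "balflags g (d # ds) i u =
     (let bal = (part g (i + 1) \<le> d \<and>
                 card {j. 2 \<le> j \<and> j \<le> length g \<and> part g j > d} = u)
      in bal # balflags g ds (i + 1) (if bal then u else Suc u))"

definition balanced_flags :: "nat list \<Rightarrow> nat list \<Rightarrow> bool list" where
  "balanced_flags g d = balflags g d 1 0"

definition balanced_parts :: "nat list \<Rightarrow> nat list \<Rightarrow> nat list" where
  "balanced_parts g d = map fst (filter snd (zip d (balanced_flags g d)))"

definition unbalanced_parts :: "nat list \<Rightarrow> nat list \<Rightarrow> nat list" where
  "unbalanced_parts g d = map fst (filter (\<lambda>p. \<not> snd p) (zip d (balanced_flags g d)))"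

definition num_balanced :: "nat list \<Rightarrow> nat list \<Rightarrow> nat" where
  "num_balanced g d = length (balanced_parts g d)"

definition setA :: "nat \<Rightarrow> nat \<Rightarrow> nat \<Rightarrow> (nat list \<times> nat list) set" where
  "setA r m n = {(a, b). is_partition a \<and> is_partition b \<and> a \<noteq> [] \<and>
      sum_list a + sum_list b = n \<and> (\<forall>x\<in>set b. x \<le> hd a) \<and>
      length a = length b + m \<and> num_balanced a b = r}"

definition setB :: "nat \<Rightarrow> nat \<Rightarrow> nat \<Rightarrow> (nat list \<times> nat list) set" where
  "setB r m n = {(a, b). is_partition a \<and> is_partition b \<and> strict_shifted a b \<and>
      sum_list a + sum_list b = n \<and> length a = length b + m + 2 * r}"

definition bal_map :: "nat list \<times> nat list \<Rightarrow> nat list \<times> nat list" where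
  "bal_map p = (rev (sort (fst p @ balanced_parts (fst p) (snd p))),
                unbalanced_parts (fst p) (snd p))"

end

theory Submission
  imports Defs "HOL-Library.Multiset"
begin

lemma H1:
  assumes "sorted_wrt (\<ge>) (xs::nat list)" "k < length xs" "P (xs!k)" "\<And>x y. y \<le> x \<Longrightarrow> P y \<Longrightarrow> P x"
  shows "k < length (filter P xs)"
proof -
  have "{0..k} \<subseteq> {i. i < length xs \<and> P (xs ! i)}"
  proof
    fix j assume "j \<in> {0..k}"
    then have j: "j \<le> k" by auto
    have "xs ! k \<le> xs ! j"
    proof (cases "j = k")
      case False
      then show ?thesis using assms(1,2) j sorted_wrt_nth_less[OF assms(1), of j k] by auto
    qed simp
    then show "j \<in> {i. i < length xs \<and> P (xs ! i)}" using assms j by auto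
  qed
  then have "card {0..k} \<le> card {i. i < length xs \<and> P (xs ! i)}"
    by (rule card_mono[rotated]) auto
  then show ?thesis by (simp add: length_filter_conv_card)
qed

lemma H2:
  assumes "sorted_wrt (\<ge>) (xs::nat list)" "k < length xs" "\<not> P (xs!k)" "\<And>x y. y \<le> x \<Longrightarrow> P y \<Longrightarrow> P x"
  shows "length (filter P xs) \<le> k"
proof -
  have "{i. i < length xs \<and> P (xs ! i)} \<subseteq> {0..<k}"
  proof
    fix j assume j: "j \<in> {i. i < length xs \<and> P (xs ! i)}"
    show "j \<in> {0..<k}"
    proof (rule ccontr)
      assume "j \<notin> {0..<k}"
      then have "k \<le> j" by auto
      then have "xs ! j \<le> xs ! k"
        using assms(1) j sorted_wrt_nth_less[OF assms(1), of k j] by (cases "k = j") simp_all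
      then have "P (xs ! k)" using assms(4) j by blast
      then show False using assms(3) by simp
    qed
  qed
  then have "card {i. i < length xs \<and> P (xs ! i)} \<le> card {0..<k}"
    by (rule card_mono[rotated]) auto
  then show ?thesis by (simp add: length_filter_conv_card)
qed

lemma H12:
  assumes "sorted_wrt (\<ge>) (xs::nat list)" "k < length xs" "\<And>x y. y \<le> x \<Longrightarrow> P y \<Longrightarrow> P x"
  shows "P (xs!k) \<longleftrightarrow> k < length (filter P xs)"
proof
  assume "P (xs!k)" then show "k < length (filter P xs)" by (rule H1[of xs k P, OF assms(1,2) _ assms(3)])
next
  assume a: "k < length (filter P xs)"
  show "P (xs!k)"
  proof (rule ccontr)
    assume "\<not> P (xs!k)"
    from H2[of xs k P, OF assms(1,2) this assms(3)] a show False by simp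
  qed
qed

lemma sorted_desc_eq:
  assumes "sorted_wrt (\<ge>) (xs::nat list)" "sorted_wrt (\<ge>) ys" "mset xs = mset ys"
  shows "xs = ys"
proof -
  have s1: "sorted (rev xs)" using assms(1) by (simp add: sorted_wrt_rev)
  have s2: "sorted (rev ys)" using assms(2) by (simp add: sorted_wrt_rev)
  have m: "mset (rev xs) = mset (rev ys)" using assms(3) by simp
  have "sort (rev ys) = rev xs" by (rule properties_for_sort[OF m s1])
  moreover have "sort (rev ys) = rev ys" by (rule sorted_sort_id[OF s2])
  ultimately show ?thesis by simp
qed

lemma CS:
  assumes "\<forall>z\<in>set xs. 0 < (z::nat)"
  shows "length (filter (\<lambda>z. z \<le> v) xs) = (\<Sum>w\<in>{1..v}. count (mset xs) w)"
  using assms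
proof (induction xs)
  case Nil then show ?case by simp
next
  case (Cons x xs)
  have "(\<Sum>w\<in>{1..v}. count (mset (x # xs)) w) = (\<Sum>w\<in>{1..v}. count (mset xs) w + (if x = w then 1 else 0))"
    by (intro sum.cong) auto
  also have "\<dots> = (\<Sum>w\<in>{1..v}. count (mset xs) w) + (if x \<in> {1..v} then 1 else 0)"
    by (simp add: sum.distrib)
  finally have e: "(\<Sum>w\<in>{1..v}. count (mset (x # xs)) w) = (\<Sum>w\<in>{1..v}. count (mset xs) w) + (if x \<in> {1..v} then 1 else 0)" .
  have "0 < x" using Cons.prems by simp
  then show ?case using Cons e by simp
qed

fun fl :: "(nat \<Rightarrow> nat) \<Rightarrow> nat list \<Rightarrow> nat \<Rightarrow> bool list" where
  "fl c [] u = []"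
| "fl c (d # ds) u = (c d \<le> u) # fl c ds (if c d \<le> u then u else Suc u)"

fun ust :: "(nat \<Rightarrow> nat) \<Rightarrow> nat list \<Rightarrow> nat \<Rightarrow> nat" where
  "ust c [] u = u"
| "ust c (d # ds) u = ust c ds (if c d \<le> u then u else Suc u)"

definition selT :: "nat list \<Rightarrow> bool list \<Rightarrow> nat list" where
  "selT d fs = map fst (filter snd (zip d fs))"
definition selF :: "nat list \<Rightarrow> bool list \<Rightarrow> nat list" where
  "selF d fs = map fst (filter (\<lambda>p. \<not> snd p) (zip d fs))"

lemma balflags_len: "length (balflags g ds i u) = length ds"
  by (induction ds arbitrary: i u) (auto simp: Let_def)

lemma length_fl[simp]: "length (fl c ds u) = length ds"
  by (induction ds arbitrary: u) auto

lemma fl_append: "fl c (xs @ ys) u = fl c xs u @ fl c ys (ust c xs u)"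
  by (induction xs arbitrary: u) auto

lemma selT_append: "length xs = length fs \<Longrightarrow> selT (xs @ ys) (fs @ gs) = selT xs fs @ selT ys gs"
  by (simp add: selT_def)

lemma selT_rep: "length fs = k \<Longrightarrow> selT (replicate k d) fs = replicate (length (filter (\<lambda>x. x) fs)) d"
proof (induction k arbitrary: fs)
  case 0 then show ?case by (simp add: selT_def)
next
  case (Suc k)
  then obtain f fs' where "fs = f # fs'" "length fs' = k" by (cases fs) auto
  then show ?case using Suc.IH by (cases f) (simp_all add: selT_def)
qed

lemma block:
  "u \<le> c d \<Longrightarrow> length (filter (\<lambda>x. x) (fl c (replicate k d) u)) = k - (c d - u)
     \<and> ust c (replicate k d) u = u + min k (c d - u)"
proof (induction k arbitrary: u)
  case 0 then show ?case by simp
next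
  case (Suc k)
  show ?case
  proof (cases "c d \<le> u")
    case True
    then have cu: "c d = u" using Suc.prems by simp
    have "fl c (replicate j d) u = replicate j True" for j
      using cu by (induction j) auto
    moreover have "ust c (replicate j d) u = u" for j
      using cu by (induction j) auto
    ultimately show ?thesis using cu by simp
  next
    case False
    then have "Suc u \<le> c d" by simp
    from Suc.IH[OF this] False show ?thesis by simp
  qed
qed

lemma mset_selTF: "length ds = length fs \<Longrightarrow> mset (selT ds fs) + mset (selF ds fs) = mset ds"
proof (induction ds arbitrary: fs)
  case Nil then show ?case by (simp add: selT_def selF_def)
next
  case (Cons d ds)
  then obtain f fs' where "fs = f # fs'" "length fs' = length ds" by (cases fs) auto
  then show ?case using Cons.IH by (cases f) (simp_all add: selT_def selF_def)
qed

lemma set_selT: "set (selT ds fs) \<subseteq> set ds"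
  by (auto simp: selT_def dest: set_zip_leftD)

lemma set_selF: "set (selF ds fs) \<subseteq> set ds"
  by (auto simp: selF_def dest: set_zip_leftD)

lemma sorted_selF: "sorted_wrt R ds \<Longrightarrow> sorted_wrt R (selF ds fs)"
proof (induction ds arbitrary: fs)
  case Nil then show ?case by (simp add: selF_def)
next
  case (Cons d ds)
  show ?case
  proof (cases fs)
    case Nil then show ?thesis by (simp add: selF_def)
  next
    case (Cons f fs')
    have IH: "sorted_wrt R (selF ds fs')" using Cons.IH Cons.prems by simp
    have "\<forall>y\<in>set (selF ds fs'). R d y" using Cons.prems set_selF[of ds fs'] by auto
    then show ?thesis using IH Cons by (cases f) (simp_all add: selF_def)
  qed
qed

lemma split_top:
  "sorted_wrt (\<ge>) ds \<Longrightarrow> set ds \<subseteq> {1..Suc N} \<Longrightarrow>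
   ds = replicate (count (mset ds) (Suc N)) (Suc N) @ filter (\<lambda>x. x < Suc N) ds"
proof (induction ds)
  case Nil then show ?case by simp
next
  case (Cons x xs)
  have IH: "xs = replicate (count (mset xs) (Suc N)) (Suc N) @ filter (\<lambda>x. x < Suc N) xs"
    using Cons by simp
  show ?case
  proof (cases "x = Suc N")
    case True
    then show ?thesis using IH by simp
  next
    case False
    then have xl: "x < Suc N" using Cons.prems by auto
    have "\<forall>y\<in>set xs. y < Suc N" using Cons.prems xl by auto
    then have "filter (\<lambda>x. x < Suc N) xs = xs" "count (mset xs) (Suc N) = 0"
      by (auto simp: count_eq_zero_iff)
    then show ?thesis using xl False by simp
  qed
qed

fun mk :: "(nat \<Rightarrow> nat) \<Rightarrow> nat \<Rightarrow> nat list" where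
  "mk c 0 = []"
| "mk c (Suc N) = replicate (c (Suc N)) (Suc N) @ mk c N"

lemma set_mk: "set (mk c N) \<subseteq> {1..N}"
  by (induction N) auto

lemma sorted_mk: "sorted_wrt (\<ge>) (mk c N)"
proof (induction N)
  case 0 then show ?case by simp
next
  case (Suc N)
  have "\<forall>y\<in>set (mk c N). y \<le> Suc N" using set_mk[of c N] by auto
  moreover have "sorted_wrt (\<ge>) (replicate n (x::nat))" for n x by (induction n) auto
  ultimately show ?case using Suc by (auto simp: sorted_wrt_append)
qed

lemma count_mk: "count (mset (mk c N)) v = (if 1 \<le> v \<and> v \<le> N then c v else 0)"
  by (induction N) auto

fun fw :: "(nat \<Rightarrow> nat) \<Rightarrow> (nat \<Rightarrow> nat) \<Rightarrow> nat \<Rightarrow> nat \<Rightarrow> nat \<Rightarrow> nat" where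
  "fw a b 0 h = (\<lambda>v. 0)"
| "fw a b (Suc N) h = (fw a b N ((h - b (Suc N)) + a (Suc N))) (Suc N := b (Suc N) - h)"

fun hs :: "(nat \<Rightarrow> nat) \<Rightarrow> (nat \<Rightarrow> nat) \<Rightarrow> nat \<Rightarrow> nat \<Rightarrow> nat \<Rightarrow> nat" where
  "hs a b 0 h = (\<lambda>v. h)"
| "hs a b (Suc N) h = (hs a b N ((h - b (Suc N)) + a (Suc N))) (Suc N := h)"

definition stp :: "nat \<Rightarrow> nat \<Rightarrow> nat \<Rightarrow> nat \<Rightarrow> nat \<Rightarrow> bool" where
  "stp A B f gin gout \<longleftrightarrow> (0 < f \<and> gin = B \<and> gout + f = A) \<or> (f = 0 \<and> B \<le> gin \<and> gout + B = gin + A)"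

lemma fw_zero: "(v = 0 \<or> N < v) \<Longrightarrow> fw a b N h v = 0"
  by (induction N arbitrary: h) auto

lemma hs_top: "hs a b N h N = h"
  by (cases N) auto

lemma fw_le: "fw a b N h v \<le> b v"
  by (induction N arbitrary: h) auto

lemma fw_stp:
  "1 \<le> v \<Longrightarrow> v \<le> N \<Longrightarrow>
   stp (a v + fw a b N h v) (b v - fw a b N h v) (fw a b N h v) (hs a b N h v) (hs a b N h (v - 1))"
proof (induction N arbitrary: h)
  case 0 then show ?case by simp
next
  case (Suc N)
  show ?case
  proof (cases "v = Suc N")
    case True
    have "hs a b (Suc N) h (v - 1) = (h - b (Suc N)) + a (Suc N)"
      using True by (simp add: hs_top)
    then show ?thesis using True by (auto simp: stp_def)
  next
    case False
    then have "v \<le> N" "v - 1 \<noteq> Suc N" using Suc.prems by auto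
    then show ?thesis using Suc.IH[OF Suc.prems(1), of "(h - b (Suc N)) + a (Suc N)"] False by simp
  qed
qed

lemma ident:
  fixes N k :: nat
  assumes "\<forall>v. 1 \<le> v \<and> v \<le> N \<longrightarrow> stp (A v) (B v) (f v) (g v) (g (v - 1))"
  shows "k \<le> N \<Longrightarrow> g k + (\<Sum>w\<in>{1..k}. A w) = g 0 + (\<Sum>w\<in>{1..k}. B w) + (\<Sum>w\<in>{1..k}. f w)"
proof (induction k)
  case 0 then show ?case by simp
next
  case (Suc k)
  have IH: "g k + (\<Sum>w\<in>{1..k}. A w) = g 0 + (\<Sum>w\<in>{1..k}. B w) + (\<Sum>w\<in>{1..k}. f w)"
    using Suc by simp
  have st: "stp (A (Suc k)) (B (Suc k)) (f (Suc k)) (g (Suc k)) (g k)"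
    using assms Suc.prems by (metis diff_Suc_1 le_add1 plus_1_eq_Suc)
  show ?case using IH st by (auto simp: stp_def)
qed

lemma uniq:
  fixes N k :: nat
  assumes "\<forall>v. 1 \<le> v \<and> v \<le> N \<longrightarrow> stp (A v) (B v) (f1 v) (g1 v) (g1 (v - 1))"
    and "\<forall>v. 1 \<le> v \<and> v \<le> N \<longrightarrow> stp (A v) (B v) (f2 v) (g2 v) (g2 (v - 1))"
    and "g1 0 = g2 0"
  shows "k \<le> N \<Longrightarrow> g1 k = g2 k \<and> (\<forall>v. 1 \<le> v \<and> v \<le> k \<longrightarrow> f1 v = f2 v)"
proof (induction k)
  case 0 then show ?case using assms(3) by simp
next
  case (Suc k)
  have IH: "g1 k = g2 k" "\<forall>v. 1 \<le> v \<and> v \<le> k \<longrightarrow> f1 v = f2 v" using Suc by simp_all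
  have s1: "stp (A (Suc k)) (B (Suc k)) (f1 (Suc k)) (g1 (Suc k)) (g1 k)"
    using assms(1) Suc.prems by (metis diff_Suc_1 le_add1 plus_1_eq_Suc)
  have s2: "stp (A (Suc k)) (B (Suc k)) (f2 (Suc k)) (g2 (Suc k)) (g2 k)"
    using assms(2) Suc.prems by (metis diff_Suc_1 le_add1 plus_1_eq_Suc)
  have "g1 (Suc k) = g2 (Suc k) \<and> f1 (Suc k) = f2 (Suc k)"
    using s1 s2 IH(1) unfolding stp_def by auto
  then show ?case using IH(2) le_Suc_eq by auto
qed

primrec gb :: "(nat \<Rightarrow> nat) \<Rightarrow> (nat \<Rightarrow> nat) \<Rightarrow> nat \<Rightarrow> nat \<Rightarrow> nat" where
  "gb A B h0 0 = h0"
| "gb A B h0 (Suc v) = (if gb A B h0 v < A (Suc v) then B (Suc v) else gb A B h0 v + B (Suc v) - A (Suc v))"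

definition fb :: "(nat \<Rightarrow> nat) \<Rightarrow> (nat \<Rightarrow> nat) \<Rightarrow> nat \<Rightarrow> nat \<Rightarrow> nat" where
  "fb A B h0 v = (if v = 0 then 0 else if gb A B h0 (v - 1) < A v then A v - gb A B h0 (v - 1) else 0)"

lemma gb_stp: "1 \<le> v \<Longrightarrow> stp (A v) (B v) (fb A B h0 v) (gb A B h0 v) (gb A B h0 (v - 1))"
proof -
  assume "1 \<le> v"
  then obtain w where v: "v = Suc w" by (cases v) auto
  show ?thesis unfolding v stp_def fb_def by auto
qed

lemma fw_from_stp:
  fixes N :: nat
  assumes "\<forall>v. 1 \<le> v \<and> v \<le> N \<longrightarrow> stp (A v) (B v) (f v) (g v) (g (v - 1))"
  shows "1 \<le> v \<Longrightarrow> v \<le> N \<Longrightarrow> fw (\<lambda>v. A v - f v) (\<lambda>v. B v + f v) N (g N) v = f v"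
  using assms
proof (induction N)
  case 0 then show ?case by simp
next
  case (Suc N)
  have st: "stp (A (Suc N)) (B (Suc N)) (f (Suc N)) (g (Suc N)) (g N)"
    using Suc.prems(3) by (metis diff_Suc_1 le_add1 plus_1_eq_Suc le_refl)
  have e1: "(g (Suc N) - (B (Suc N) + f (Suc N))) + (A (Suc N) - f (Suc N)) = g N"
    and e2: "(B (Suc N) + f (Suc N)) - g (Suc N) = f (Suc N)"
    using st unfolding stp_def by auto
  show ?case
  proof (cases "v = Suc N")
    case True then show ?thesis using e2 by simp
  next
    case False
    then have "v \<le> N" using Suc.prems by simp
    moreover have "\<forall>v. 1 \<le> v \<and> v \<le> N \<longrightarrow> stp (A v) (B v) (f v) (g v) (g (v - 1))"
      using Suc.prems(3) by auto
    ultimately show ?thesis using Suc.IH Suc.prems(1) False e1 by simp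
  qed
qed

lemma fwd_char:
  fixes N :: nat
  assumes "\<forall>v < N. c v = c (Suc v) + a (Suc v)"
  shows "sorted_wrt (\<ge>) ds \<Longrightarrow> set ds \<subseteq> {1..N} \<Longrightarrow> u \<le> c N \<Longrightarrow>
    (\<forall>v. 1 \<le> v \<and> v \<le> N \<longrightarrow> count (mset ds) v = b v) \<Longrightarrow>
    count (mset (selT ds (fl c ds u))) v = fw a b N (c N - u) v"
  using assms
proof (induction N arbitrary: ds u v)
  case 0
  then have "ds = []" by auto
  then show ?case by (simp add: selT_def)
next
  case (Suc N)
  define k where "k = count (mset ds) (Suc N)"
  define ds' where "ds' = filter (\<lambda>x. x < Suc N) ds"
  define h where "h = c (Suc N) - u"
  define u' where "u' = u + min k h"
  have kb: "k = b (Suc N)" using Suc.prems(4) k_def by simp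
  have dsd: "ds = replicate k (Suc N) @ ds'"
    unfolding k_def ds'_def by (rule split_top[OF Suc.prems(1,2)])
  have blk: "length (filter (\<lambda>x. x) (fl c (replicate k (Suc N)) u)) = k - h"
     "ust c (replicate k (Suc N)) u = u'"
    using block[of u c "Suc N" k, OF Suc.prems(3)] unfolding h_def u'_def by auto
  have sel: "selT ds (fl c ds u) = replicate (k - h) (Suc N) @ selT ds' (fl c ds' u')"
  proof -
    have "selT ds (fl c ds u) = selT (replicate k (Suc N) @ ds') (fl c (replicate k (Suc N)) u @ fl c ds' u')"
      using dsd fl_append[of c "replicate k (Suc N)" ds' u] blk(2) by simp
    also have "\<dots> = selT (replicate k (Suc N)) (fl c (replicate k (Suc N)) u) @ selT ds' (fl c ds' u')"
      by (rule selT_append) simp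
    also have "selT (replicate k (Suc N)) (fl c (replicate k (Suc N)) u) = replicate (k - h) (Suc N)"
      using selT_rep[of "fl c (replicate k (Suc N)) u" k "Suc N"] blk(1) by simp
    finally show ?thesis .
  qed
  have cN: "c N = c (Suc N) + a (Suc N)" using Suc.prems(5) by simp
  have s': "sorted_wrt (\<ge>) ds'" unfolding ds'_def using Suc.prems(1) by (simp add: sorted_wrt_filter)
  have set': "set ds' \<subseteq> {1..N}" unfolding ds'_def using Suc.prems(2) by auto
  have u'le: "u' \<le> c N" unfolding u'_def h_def using Suc.prems(3) cN by simp
  have cnt': "\<forall>v. 1 \<le> v \<and> v \<le> N \<longrightarrow> count (mset ds') v = b v"
    using Suc.prems(4) unfolding ds'_def by auto
  have cst': "\<forall>v<N. c v = c (Suc v) + a (Suc v)" using Suc.prems(5) by simp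
  have IH: "count (mset (selT ds' (fl c ds' u'))) w = fw a b N (c N - u') w" for w
    using Suc.IH[OF s' set' u'le cnt' cst'] .
  have eq: "c N - u' = (h - b (Suc N)) + a (Suc N)"
    unfolding u'_def h_def using cN kb Suc.prems(3) by simp
  show ?case
  proof (cases "v = Suc N")
    case True
    have "count (mset (selT ds' (fl c ds' u'))) v = 0"
      using IH[of v] fw_zero[of v N a b] True by simp
    then show ?thesis using True sel kb h_def by simp
  next
    case False
    then show ?thesis using sel IH[of v] eq h_def by simp
  qed
qed

definition cf :: "nat list \<Rightarrow> nat \<Rightarrow> nat" where
  "cf g x = length (filter (\<lambda>y. x < y) (tl g))"

lemma len_filter_mono: "(\<And>x. P x \<Longrightarrow> Q x) \<Longrightarrow> length (filter P xs) \<le> length (filter Q xs)"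
  by (induction xs) auto

lemma cf_anti: "x \<le> y \<Longrightarrow> cf g y \<le> cf g x"
  unfolding cf_def by (rule len_filter_mono) simp

lemma cardc: "card {j. 2 \<le> j \<and> j \<le> length g \<and> part g j > d} = cf g d"
proof -
  have "{j. 2 \<le> j \<and> j \<le> length g \<and> part g j > d} = (\<lambda>i. i + 2) ` {i. i < length (tl g) \<and> d < tl g ! i}"
  proof (rule set_eqI, rule iffI)
    fix j assume "j \<in> {j. 2 \<le> j \<and> j \<le> length g \<and> part g j > d}"
    then have j: "2 \<le> j" "j \<le> length g" "part g j > d" by auto
    then have "g ! (j - 1) > d" unfolding Defs.part_def by (simp split: if_splits)
    moreover have "tl g ! (j - 2) = g ! (j - 1)"
    proof -
      have "Suc (j - 2) = j - 1" using j by simp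
      then show ?thesis using j by (simp add: nth_tl)
    qed
    ultimately have "j - 2 \<in> {i. i < length (tl g) \<and> d < tl g ! i}" using j by auto
    moreover have "j = (j - 2) + 2" using j by simp
    ultimately show "j \<in> (\<lambda>i. i + 2) ` {i. i < length (tl g) \<and> d < tl g ! i}" by blast
  next
    fix j assume "j \<in> (\<lambda>i. i + 2) ` {i. i < length (tl g) \<and> d < tl g ! i}"
    then obtain i where i: "j = i + 2" "i < length (tl g)" "d < tl g ! i" by auto
    have "tl g ! i = g ! (j - 1)" using i by (simp add: nth_tl)
    then show "j \<in> {j. 2 \<le> j \<and> j \<le> length g \<and> part g j > d}" using i by (auto simp: Defs.part_def)
  qed
  moreover have "inj_on (\<lambda>i::nat. i + 2) A" for A by (simp add: inj_on_def)
  ultimately show ?thesis by (simp add: card_image cf_def length_filter_conv_card)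
qed

lemma balflags_fl:
  assumes g: "sorted_wrt (\<ge>) g"
  shows "sorted_wrt (\<ge>) ds \<Longrightarrow> u < i \<Longrightarrow> (\<forall>d\<in>set ds. u \<le> cf g d) \<Longrightarrow>
    balflags g ds i u = fl (cf g) ds u"
proof (induction ds arbitrary: i u)
  case Nil then show ?case by simp
next
  case (Cons d ds)
  have ud: "u \<le> cf g d" using Cons.prems(3) by simp
  have beq: "(part g (i + 1) \<le> d \<and> card {j. 2 \<le> j \<and> j \<le> length g \<and> part g j > d} = u) = (cf g d \<le> u)"
  proof (cases "cf g d \<le> u")
    case True
    then have cu: "cf g d = u" using ud by simp
    have "part g (i + 1) \<le> d"
    proof (rule ccontr)
      assume "\<not> part g (i + 1) \<le> d"
      then have pd: "d < part g (i + 1)" by simp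
      then have il: "i + 1 \<le> length g" unfolding Defs.part_def by (cases "i + 1 \<le> length g") simp_all
      have "part g (i + 1) = g ! i" using il by (simp add: Defs.part_def)
      moreover have "tl g ! (i - 1) = g ! i" using Cons.prems(2) il by (simp add: nth_tl)
      ultimately have "d < tl g ! (i - 1)" using pd by simp
      moreover have "i - 1 < length (tl g)" using il Cons.prems(2) by simp
      moreover have "sorted_wrt (\<ge>) (tl g)" using g by (cases g) auto
      ultimately have "i - 1 < length (filter (\<lambda>y. d < y) (tl g))"
        using H1[of "tl g" "i - 1" "\<lambda>y. d < y"] by simp
      then show False using cu Cons.prems(2) unfolding cf_def by simp
    qed
    then show ?thesis using cu cardc[of g d] by simp
  next
    case False
    then show ?thesis using cardc[of g d] by simp
  qed
  define u' where "u' = (if cf g d \<le> u then u else Suc u)"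
  have "\<forall>d'\<in>set ds. u' \<le> cf g d'"
  proof
    fix d' assume "d' \<in> set ds"
    then have "d' \<le> d" using Cons.prems(1) by simp
    then have "cf g d \<le> cf g d'" by (rule cf_anti)
    then show "u' \<le> cf g d'" unfolding u'_def using Cons.prems(3) \<open>d' \<in> set ds\<close> by auto
  qed
  moreover have "u' < i + 1" unfolding u'_def using Cons.prems(2) by simp
  moreover have "sorted_wrt (\<ge>) ds" using Cons.prems(1) by simp
  ultimately have IH: "balflags g ds (i + 1) u' = fl (cf g) ds u'" using Cons.IH by blast
  show ?case using beq IH unfolding u'_def by (simp add: Let_def)
qed

lemma part_pos: "0 < part g j \<Longrightarrow> 1 \<le> j \<and> j \<le> length g \<and> part g j = g ! (j - 1)"
  unfolding Defs.part_def by (auto split: if_splits)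

lemma part_in: "1 \<le> j \<Longrightarrow> j \<le> length g \<Longrightarrow> part g j = g ! (j - 1)"
  unfolding Defs.part_def by simp

lemma TS1:
  assumes px: "is_partition x" and py: "is_partition y" and ss: "strict_shifted x y" and v: "1 \<le> v"
  shows "length (filter (\<lambda>z. v \<le> z) y) \<le> length (filter (\<lambda>z. v < z) (tl x))"
proof (cases "length (filter (\<lambda>z. v \<le> z) y) = 0")
  case True then show ?thesis by simp
next
  case False
  define k where "k = length (filter (\<lambda>z. v \<le> z) y)"
  have k1: "1 \<le> k" using False unfolding k_def by linarith
  have kl: "k \<le> length y" unfolding k_def by (rule length_filter_le)
  have sy: "sorted_wrt (\<ge>) y" using py by (simp add: is_partition_def)
  have sx: "sorted_wrt (\<ge>) x" using px by (simp add: is_partition_def)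
  have e: "(v \<le> y ! (k - 1)) = (k - 1 < length (filter (\<lambda>z. v \<le> z) y))"
    by (rule H12) (use sy kl k1 in auto)
  have "v \<le> y ! (k - 1)" using e k1 unfolding k_def[symmetric] by simp
  moreover have "part y k = y ! (k - 1)" using k1 kl by (rule part_in)
  moreover have "part x (k + 1) > part y k" using ss k1 kl unfolding strict_shifted_def by simp
  ultimately have pv: "v < part x (k + 1)" by simp
  then have "1 \<le> k + 1 \<and> k + 1 \<le> length x \<and> part x (k + 1) = x ! k" using part_pos[of x "k + 1"] by simp
  then have xl: "k + 1 \<le> length x" and xk: "v < x ! k" using pv by auto
  have "tl x ! (k - 1) = x ! k" using k1 xl by (simp add: nth_tl)
  moreover have "sorted_wrt (\<ge>) (tl x)" using sx by (cases x) auto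
  moreover have "k - 1 < length (tl x)" using xl k1 by simp
  ultimately have "k - 1 < length (filter (\<lambda>z. v < z) (tl x))"
    using H1[of "tl x" "k - 1" "\<lambda>z. v < z"] xk by simp
  then show ?thesis using k1 k_def by simp
qed

lemma TS2:
  assumes px: "is_partition x" and py: "is_partition y" and ne: "x \<noteq> []"
    and th: "\<forall>v. 1 \<le> v \<longrightarrow> length (filter (\<lambda>z. v \<le> z) y) \<le> length (filter (\<lambda>z. v < z) (tl x))"
  shows "strict_shifted x y"
proof -
  have sy: "sorted_wrt (\<ge>) y" using py by (simp add: is_partition_def)
  have sx: "sorted_wrt (\<ge>) x" using px by (simp add: is_partition_def)
  have stx: "sorted_wrt (\<ge>) (tl x)" using sx by (cases x) auto
  have main: "i < length x \<and> part x (i + 1) > part y i" if i: "1 \<le> i" "i \<le> length y" for i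
  proof -
    define t where "t = y ! (i - 1)"
    have "t \<in> set y" unfolding t_def using i by simp
    then have tpos: "1 \<le> t" using py unfolding is_partition_def by auto
    have "i - 1 < length (filter (\<lambda>z. t \<le> z) y)"
      using H1[of y "i - 1" "\<lambda>z. t \<le> z"] sy i t_def by simp
    also have "\<dots> \<le> length (filter (\<lambda>z. t < z) (tl x))" using th[rule_format, OF tpos] .
    finally have lt: "i - 1 < length (filter (\<lambda>z. t < z) (tl x))" .
    have il: "i - 1 < length (tl x)" using lt length_filter_le[of "\<lambda>z. t < z" "tl x"] by simp
    have "t < tl x ! (i - 1)"
      using H12[of "tl x" "i - 1" "\<lambda>z. t < z"] stx il lt by simp
    moreover have "tl x ! (i - 1) = x ! i" using i il by (simp add: nth_tl)
    moreover have "part x (i + 1) = x ! i" using part_in[of "i + 1" x] il i by simp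
    moreover have "part y i = t" unfolding t_def using i by (rule part_in)
    ultimately show ?thesis using il i by simp
  qed
  have "length x > length y"
  proof (cases "y = []")
    case True then show ?thesis using ne by simp
  next
    case False
    then have "1 \<le> length y" by (cases y) auto
    then show ?thesis using main[of "length y"] by simp
  qed
  then show ?thesis unfolding strict_shifted_def using main by simp
qed

lemma cf_step: "length (filter (\<lambda>y. v < y) xs) = length (filter (\<lambda>y. Suc v < y) xs) + count (mset xs) (Suc v)"
  by (induction xs) auto

lemma len_all: "set xs \<subseteq> {1..(N::nat)} \<Longrightarrow> length xs = (\<Sum>w\<in>{1..N}. count (mset xs) w)"
proof -
  assume a: "set xs \<subseteq> {1..N}"
  then have "filter (\<lambda>z. z \<le> N) xs = xs" by (intro filter_True) auto
  moreover have "\<forall>z\<in>set xs. 0 < z" using a by auto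
  ultimately show ?thesis using CS[of xs N] by simp
qed

lemma LT:
  fixes N v :: nat
  assumes X: "set X \<subseteq> {1..N}" and Y: "set y \<subseteq> {1..N}" and v: "1 \<le> v"
  shows "(length (filter (\<lambda>z. v \<le> z) y) \<le> length (filter (\<lambda>z. v < z) X)) \<longleftrightarrow>
    (\<Sum>w\<in>{1..v}. count (mset X) w) + (\<Sum>w\<in>{1..N}. count (mset y) w)
      \<le> (\<Sum>w\<in>{1..N}. count (mset X) w) + (\<Sum>w\<in>{1..v-1}. count (mset y) w)"
proof -
  have px: "\<forall>z\<in>set X. 0 < z" and py: "\<forall>z\<in>set y. 0 < z" using X Y by auto
  have e1: "length (filter (\<lambda>z. v \<le> z) y) + length (filter (\<lambda>z. z \<le> v - 1) y) = length y"
  proof -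
    have "filter (\<lambda>z. \<not> v \<le> z) y = filter (\<lambda>z. z \<le> v - 1) y" using v by (intro filter_cong) auto
    then show ?thesis using sum_length_filter_compl[of "\<lambda>z. v \<le> z" y] by simp
  qed
  have e2: "length (filter (\<lambda>z. v < z) X) + length (filter (\<lambda>z. z \<le> v) X) = length X"
  proof -
    have "filter (\<lambda>z. \<not> v < z) X = filter (\<lambda>z. z \<le> v) X" by (intro filter_cong) auto
    then show ?thesis using sum_length_filter_compl[of "\<lambda>z. v < z" X] by simp
  qed
  show ?thesis using e1 e2 CS[OF px, of v] CS[OF py, of "v - 1"] len_all[OF X] len_all[OF Y] by linarith
qed

lemma THR:
  fixes N :: nat
  assumes st: "\<forall>v. 1 \<le> v \<and> v \<le> N \<longrightarrow> stp (A v) (B v) (f v) (g v) (g (v - 1))"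
    and gN: "g N = 0" and v: "1 \<le> v" "v \<le> N"
  shows "(\<Sum>w\<in>{1..v}. A w) + (\<Sum>w\<in>{1..N}. B w) \<le> (\<Sum>w\<in>{1..N}. A w) + (\<Sum>w\<in>{1..v-1}. B w)"
proof -
  have iv: "g v + (\<Sum>w\<in>{1..v}. A w) = g 0 + (\<Sum>w\<in>{1..v}. B w) + (\<Sum>w\<in>{1..v}. f w)"
    using ident[OF st v(2)] .
  have iN: "g N + (\<Sum>w\<in>{1..N}. A w) = g 0 + (\<Sum>w\<in>{1..N}. B w) + (\<Sum>w\<in>{1..N}. f w)"
    using ident[OF st le_refl] .
  have Bg: "B v \<le> g v" using st v unfolding stp_def by auto
  obtain u where u: "v = Suc u" using v by (cases v) auto
  have Tv: "(\<Sum>w\<in>{1..v}. B w) = (\<Sum>w\<in>{1..v-1}. B w) + B v" unfolding u by simp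
  have Fm: "(\<Sum>w\<in>{1..v}. f w) \<le> (\<Sum>w\<in>{1..N}. f w)" using v by (intro sum_mono2) auto
  have Tm: "(\<Sum>w\<in>{1..v-1}. B w) \<le> (\<Sum>w\<in>{1..N}. B w)" using v by (intro sum_mono2) auto
  show ?thesis using iv iN Bg Tv Fm Tm gN by linarith
qed

lemma part_facts:
  assumes "is_partition al" "al \<noteq> []"
  shows "al = hd al # tl al" "sorted_wrt (\<ge>) al" "sorted_wrt (\<ge>) (tl al)" "set (tl al) \<subseteq> {1..hd al}"
    "\<forall>z\<in>set al. 0 < z \<and> z \<le> hd al" "1 \<le> hd al"
proof -
  show e: "al = hd al # tl al" using assms(2) by simp
  show s: "sorted_wrt (\<ge>) al" using assms(1) by (simp add: is_partition_def)
  show "sorted_wrt (\<ge>) (tl al)" using s by (cases al) auto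
  have p: "\<forall>z\<in>set al. 0 < z" using assms(1) by (simp add: is_partition_def)
  have le: "\<forall>z\<in>set (tl al). z \<le> hd al" using s e by (metis sorted_wrt.simps(2))
  show "set (tl al) \<subseteq> {1..hd al}" using p le e by (metis Suc_leI atLeastAtMost_iff list.set_intros(2) One_nat_def subsetI)
  show "\<forall>z\<in>set al. 0 < z \<and> z \<le> hd al" using p le e by (metis order_refl set_ConsD)
  show "1 \<le> hd al" using p e by (metis Suc_leI list.set_intros(1) One_nat_def)
qed

lemma fwd:
  assumes pa: "is_partition al" and pb: "is_partition be" and ne: "al \<noteq> []"
    and bnd: "\<forall>x\<in>set be. x \<le> hd al"
    and aa: "\<forall>v. 1 \<le> v \<and> v \<le> hd al \<longrightarrow> count (mset (tl al)) v = a v"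
    and bb: "\<forall>v. 1 \<le> v \<and> v \<le> hd al \<longrightarrow> count (mset be) v = b v"
  shows "count (mset (balanced_parts al be)) v = fw a b (hd al) 0 v"
proof -
  note pf = part_facts[OF pa ne]
  have sb: "sorted_wrt (\<ge>) be" using pb by (simp add: is_partition_def)
  have setb: "set be \<subseteq> {1..hd al}" using pb bnd unfolding is_partition_def
    by (auto simp: Suc_le_eq)
  have c0: "cf al (hd al) = 0" unfolding cf_def using pf(4) by (auto simp: filter_empty_conv)
  have cst: "\<forall>v < hd al. cf al v = cf al (Suc v) + a (Suc v)"
    using aa cf_step unfolding cf_def by (metis Suc_leI le_add1 plus_1_eq_Suc)
  have bf: "balflags al be 1 0 = fl (cf al) be 0"
    by (rule balflags_fl[OF pf(2) sb]) auto
  have "balanced_parts al be = selT be (fl (cf al) be 0)"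
    unfolding balanced_parts_def balanced_flags_def selT_def bf ..
  then show ?thesis using fwd_char[OF cst sb setb _ bb, of 0 v] c0 by simp
qed

lemma img:
  assumes pa: "is_partition al" and pb: "is_partition be" and ne: "al \<noteq> []"
    and bnd: "\<forall>x\<in>set be. x \<le> hd al"
    and xy: "bal_map (al, be) = (x, y)"
  defines "f \<equiv> fw (count (mset (tl al))) (count (mset be)) (hd al) 0"
  shows "is_partition x" "is_partition y" "x \<noteq> []" "hd x = hd al"
    "set (tl x) \<subseteq> {1..hd al}" "set y \<subseteq> {1..hd al}"
    "\<And>v. count (mset (tl x)) v = count (mset (tl al)) v + f v"
    "\<And>v. count (mset y) v + f v = count (mset be) v"
    "mset x + mset y = mset al + mset be"
    "num_balanced al be = (\<Sum>w\<in>{1..hd al}. f w)"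
proof -
  note pf = part_facts[OF pa ne]
  define N where "N = hd al"
  define bp where "bp = balanced_parts al be"
  have xd: "x = rev (sort (al @ bp))" and yd: "y = unbalanced_parts al be"
    using xy unfolding bal_map_def bp_def by auto
  have sb: "sorted_wrt (\<ge>) be" using pb by (simp add: is_partition_def)
  have setb: "set be \<subseteq> {1..N}" using pb bnd unfolding is_partition_def N_def
    by (auto simp: Suc_le_eq)
  have cbp: "count (mset bp) v = f v" for v
    unfolding bp_def f_def by (rule fwd[OF pa pb ne bnd]) auto
  have fl_len: "length be = length (balanced_flags al be)"
    unfolding balanced_flags_def by (rule balflags_len[symmetric])
  have msplit: "mset bp + mset y = mset be"
    using mset_selTF[OF fl_len] unfolding bp_def yd balanced_parts_def unbalanced_parts_def selT_def selF_def .
  have setbp: "set bp \<subseteq> set be" unfolding bp_def balanced_parts_def using set_selT unfolding selT_def by blast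
  have sety: "set y \<subseteq> set be" unfolding yd unbalanced_parts_def using set_selF unfolding selF_def by blast
  show "is_partition y"
  proof -
    have "sorted_wrt (\<ge>) y" unfolding yd unbalanced_parts_def using sorted_selF[OF sb] unfolding selF_def by blast
    then show ?thesis using sety pb unfolding is_partition_def by auto
  qed
  show "set y \<subseteq> {1..hd al}" using sety setb N_def by auto
  have mx: "mset x = mset al + mset bp" unfolding xd by simp
  have sx: "sorted_wrt (\<ge>) x" unfolding xd by (simp add: sorted_wrt_rev)
  have setx: "set x = set al \<union> set bp" using mx by (metis set_mset_mset set_mset_union)
  have xle: "\<forall>z\<in>set x. 0 < z \<and> z \<le> N" using setx pf(5) setbp setb N_def by auto
  show "is_partition x" using sx xle unfolding is_partition_def by auto
  have Nin: "N \<in> set x" using setx pf(1) N_def by (metis UnI1 list.set_intros(1))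
  show xne: "x \<noteq> []" using Nin by auto
  have hx: "hd x = N"
  proof -
    have "x = hd x # tl x" using xne by simp
    then have "\<forall>z\<in>set (tl x). z \<le> hd x" using sx by (metis sorted_wrt.simps(2))
    then have "N \<le> hd x" using Nin \<open>x = hd x # tl x\<close> by (metis eq_iff set_ConsD)
    moreover have "hd x \<le> N" using xle xne by simp
    ultimately show ?thesis by simp
  qed
  then show "hd x = hd al" using N_def by simp
  have mtx: "mset (tl x) = mset (tl al) + mset bp"
  proof -
    have "mset x = add_mset N (mset (tl x))" using xne hx by (metis mset.simps(2) list.collapse)
    moreover have "mset al = add_mset N (mset (tl al))" using pf(1) N_def by (metis mset.simps(2))
    ultimately show ?thesis using mx by simp
  qed
  show "count (mset (tl x)) v = count (mset (tl al)) v + f v" for v using mtx cbp by simp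
  show "count (mset y) v + f v = count (mset be) v" for v using msplit cbp
    by (metis count_union add.commute)
  show "mset x + mset y = mset al + mset be" using mx msplit by (simp add: add.assoc)
  show "set (tl x) \<subseteq> {1..hd al}" using xle hx N_def xne by (metis list.set_sel(2) atLeastAtMost_iff subsetI Suc_le_eq One_nat_def)
  have "num_balanced al be = length bp" unfolding num_balanced_def bp_def ..
  also have "\<dots> = (\<Sum>w\<in>{1..N}. count (mset bp) w)" using setbp setb by (intro len_all) auto
  finally show "num_balanced al be = (\<Sum>w\<in>{1..hd al}. f w)" using cbp N_def by simp
qed

lemma fw_cong: "(\<forall>v. 1 \<le> v \<and> v \<le> N \<longrightarrow> a v = a' v \<and> b v = b' v) \<Longrightarrow> fw a b N h = fw a' b' N h"
  by (induction N arbitrary: h) auto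

lemma stp_full:
  assumes pa: "is_partition al" and pb: "is_partition be" and ne: "al \<noteq> []"
    and bnd: "\<forall>x\<in>set be. x \<le> hd al"
    and xy: "bal_map (al, be) = (x, y)"
  defines "f \<equiv> fw (count (mset (tl al))) (count (mset be)) (hd al) 0"
    and "g \<equiv> hs (count (mset (tl al))) (count (mset be)) (hd al) 0"
  shows "\<forall>v. 1 \<le> v \<and> v \<le> hd al \<longrightarrow> stp (count (mset (tl x)) v) (count (mset y) v) (f v) (g v) (g (v - 1))"
    "g (hd al) = 0"
proof -
  note I = img[OF pa pb ne bnd xy]
  show "\<forall>v. 1 \<le> v \<and> v \<le> hd al \<longrightarrow> stp (count (mset (tl x)) v) (count (mset y) v) (f v) (g v) (g (v - 1))"
  proof (intro allI impI)
    fix v assume v: "1 \<le> v \<and> v \<le> hd al"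
    have e1: "count (mset (tl x)) v = count (mset (tl al)) v + f v" using I(7) unfolding f_def .
    have e2: "count (mset y) v = count (mset be) v - f v" using I(8)[of v] unfolding f_def by simp
    show "stp (count (mset (tl x)) v) (count (mset y) v) (f v) (g v) (g (v - 1))"
      unfolding e1 e2 unfolding f_def g_def using fw_stp v by blast
  qed
  show "g (hd al) = 0" unfolding g_def by (rule hs_top)
qed

lemma sumeq: "mset x + mset y = mset al + mset be \<Longrightarrow> sum_list x + sum_list y = sum_list al + sum_list (be::nat list)"
  by (metis sum_mset_sum_list sum_mset.union)

lemma into:
  assumes "(al, be) \<in> setA r m n"
  shows "bal_map (al, be) \<in> setB r m n"
proof -
  obtain x y where xy: "bal_map (al, be) = (x, y)" by (cases "bal_map (al, be)") auto
  from assms have pa: "is_partition al" and pb: "is_partition be" and ne: "al \<noteq> []"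
    and sm: "sum_list al + sum_list be = n" and bnd: "\<forall>x\<in>set be. x \<le> hd al"
    and ln: "length al = length be + m" and nb: "num_balanced al be = r"
    unfolding setA_def by auto
  note I = img[OF pa pb ne bnd xy]
  note SF = stp_full[OF pa pb ne bnd xy]
  define N where "N = hd al"
  define f where "f = fw (count (mset (tl al))) (count (mset be)) (hd al) 0"
  have setb: "set be \<subseteq> {1..N}" using pb bnd unfolding is_partition_def N_def
    by (auto simp: Suc_le_eq)
  have lx: "length x + length y = length al + length be"
    using arg_cong[OF I(9), of size] by simp
  have ly: "length y + r = length be"
  proof -
    have "length y = (\<Sum>w\<in>{1..N}. count (mset y) w)" using I(6) N_def by (intro len_all) auto
    moreover have "length be = (\<Sum>w\<in>{1..N}. count (mset be) w)" using setb by (intro len_all)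
    moreover have "(\<Sum>w\<in>{1..N}. count (mset y) w) + (\<Sum>w\<in>{1..N}. f w) = (\<Sum>w\<in>{1..N}. count (mset be) w)"
      using I(8) unfolding f_def sum.distrib[symmetric] by simp
    moreover have "r = (\<Sum>w\<in>{1..N}. f w)" using I(10) nb N_def f_def by simp
    ultimately show ?thesis by simp
  qed
  have ss: "strict_shifted x y"
  proof (rule TS2[OF I(1) I(2) I(3)], intro allI impI)
    fix v :: nat assume v: "1 \<le> v"
    show "length (filter (\<lambda>z. v \<le> z) y) \<le> length (filter (\<lambda>z. v < z) (tl x))"
    proof (cases "v \<le> N")
      case True
      have "(\<Sum>w\<in>{1..v}. count (mset (tl x)) w) + (\<Sum>w\<in>{1..N}. count (mset y) w)
          \<le> (\<Sum>w\<in>{1..N}. count (mset (tl x)) w) + (\<Sum>w\<in>{1..v-1}. count (mset y) w)"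
        using THR[OF SF(1)[folded N_def] SF(2)[folded N_def] v True] .
      then show ?thesis using LT[of "tl x" N y v] I(5) I(6) v N_def by simp
    next
      case False
      then have "filter (\<lambda>z. v \<le> z) y = []" using I(6) N_def by (auto simp: filter_empty_conv)
      then show ?thesis by simp
    qed
  qed
  show ?thesis unfolding xy setB_def using I(1,2) ss sumeq[OF I(9)] sm lx ly ln by auto
qed

lemma count_out: "set xs \<subseteq> {1..(N::nat)} \<Longrightarrow> \<not> (1 \<le> v \<and> v \<le> N) \<Longrightarrow> count (mset xs) v = 0"
  by (auto simp: count_eq_zero_iff)

lemma injA:
  assumes A1: "(al1, be1) \<in> setA r m n" and A2: "(al2, be2) \<in> setA r m n"
    and eq: "bal_map (al1, be1) = bal_map (al2, be2)"
  shows "(al1, be1) = (al2, be2)"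
proof -
  obtain x y where xy1: "bal_map (al1, be1) = (x, y)" by (cases "bal_map (al1, be1)") auto
  have xy2: "bal_map (al2, be2) = (x, y)" using xy1 eq by simp
  from A1 have pa1: "is_partition al1" and pb1: "is_partition be1" and ne1: "al1 \<noteq> []"
    and bnd1: "\<forall>x\<in>set be1. x \<le> hd al1" and nb1: "num_balanced al1 be1 = r"
    unfolding setA_def by auto
  from A2 have pa2: "is_partition al2" and pb2: "is_partition be2" and ne2: "al2 \<noteq> []"
    and bnd2: "\<forall>x\<in>set be2. x \<le> hd al2" and nb2: "num_balanced al2 be2 = r"
    unfolding setA_def by auto
  note I1 = img[OF pa1 pb1 ne1 bnd1 xy1] and I2 = img[OF pa2 pb2 ne2 bnd2 xy2]
  note S1 = stp_full[OF pa1 pb1 ne1 bnd1 xy1] and S2 = stp_full[OF pa2 pb2 ne2 bnd2 xy2]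
  have hN: "hd al2 = hd al1" using I1(4) I2(4) by simp
  define N where "N = hd al1"
  define f1 where "f1 = fw (count (mset (tl al1))) (count (mset be1)) (hd al1) 0"
  define f2 where "f2 = fw (count (mset (tl al2))) (count (mset be2)) (hd al2) 0"
  define g1 where "g1 = hs (count (mset (tl al1))) (count (mset be1)) (hd al1) 0"
  define g2 where "g2 = hs (count (mset (tl al2))) (count (mset be2)) (hd al2) 0"
  have st1: "\<forall>v. 1 \<le> v \<and> v \<le> N \<longrightarrow> stp (count (mset (tl x)) v) (count (mset y) v) (f1 v) (g1 v) (g1 (v - 1))"
    using S1(1) unfolding f1_def g1_def N_def .
  have st2: "\<forall>v. 1 \<le> v \<and> v \<le> N \<longrightarrow> stp (count (mset (tl x)) v) (count (mset y) v) (f2 v) (g2 v) (g2 (v - 1))"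
    using S2(1) hN unfolding f2_def g2_def N_def by simp
  have gN1: "g1 N = 0" using S1(2) unfolding g1_def N_def .
  have gN2: "g2 N = 0" using S2(2) hN unfolding g2_def N_def by simp
  have F1: "(\<Sum>w\<in>{1..N}. f1 w) = r" using I1(10) nb1 unfolding f1_def N_def by simp
  have F2: "(\<Sum>w\<in>{1..N}. f2 w) = r" using I2(10) nb2 hN unfolding f2_def N_def by simp
  have "g1 0 = g2 0"
    using ident[OF st1 le_refl] ident[OF st2 le_refl] gN1 gN2 F1 F2 by linarith
  then have fe: "\<forall>v. 1 \<le> v \<and> v \<le> N \<longrightarrow> f1 v = f2 v" using uniq[OF st1 st2] by blast
  have set1: "set (tl al1) \<subseteq> {1..N}" "set be1 \<subseteq> {1..N}"
    using part_facts(4)[OF pa1 ne1] pb1 bnd1 unfolding N_def is_partition_def by (auto simp: Suc_le_eq)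
  have set2: "set (tl al2) \<subseteq> {1..N}" "set be2 \<subseteq> {1..N}"
    using part_facts(4)[OF pa2 ne2] pb2 bnd2 hN unfolding N_def is_partition_def by (auto simp: Suc_le_eq)
  have "mset (tl al1) = mset (tl al2)"
  proof (rule multiset_eqI)
    fix v
    show "count (mset (tl al1)) v = count (mset (tl al2)) v"
    proof (cases "1 \<le> v \<and> v \<le> N")
      case True
      then show ?thesis using I1(7)[of v] I2(7)[of v] fe hN unfolding f1_def f2_def N_def by force
    next
      case False
      then show ?thesis by (simp only: count_out[OF set1(1) False] count_out[OF set2(1) False])
    qed
  qed
  then have t: "tl al1 = tl al2"
    using sorted_desc_eq part_facts(3)[OF pa1 ne1] part_facts(3)[OF pa2 ne2] by blast
  have "mset be1 = mset be2"
  proof (rule multiset_eqI)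
    fix v
    show "count (mset be1) v = count (mset be2) v"
    proof (cases "1 \<le> v \<and> v \<le> N")
      case True
      then show ?thesis using I1(8)[of v] I2(8)[of v] fe hN unfolding f1_def f2_def N_def by force
    next
      case False
      then show ?thesis by (simp only: count_out[OF set1(2) False] count_out[OF set2(2) False])
    qed
  qed
  then have "be1 = be2"
    using sorted_desc_eq pb1 pb2 unfolding is_partition_def by blast
  moreover have "al1 = al2" using t hN part_facts(1)[OF pa1 ne1] part_facts(1)[OF pa2 ne2] by metis
  ultimately show ?thesis by simp
qed

lemma surjB:
  assumes B: "(x, y) \<in> setB r m n"
  shows "\<exists>p\<in>setA r m n. bal_map p = (x, y)"
proof -
  from B have px: "is_partition x" and py: "is_partition y" and ss: "strict_shifted x y"
    and sm: "sum_list x + sum_list y = n" and ln: "length x = length y + m + 2 * r"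
    unfolding setB_def by auto
  have ne: "x \<noteq> []" using ss unfolding strict_shifted_def by auto
  note pf = part_facts[OF px ne]
  define N where "N = hd x"
  define X where "X = tl x"
  define A where "A = count (mset X)"
  define B where "B = count (mset y)"
  have setX: "set X \<subseteq> {1..N}" using pf(4) unfolding X_def N_def .
  have sety: "set y \<subseteq> {1..N}"
  proof
    fix z assume z: "z \<in> set y"
    have z1: "1 \<le> z" using py z unfolding is_partition_def by (auto simp: Suc_le_eq)
    have "z \<le> N"
    proof (rule ccontr)
      assume "\<not> z \<le> N"
      then have "filter (\<lambda>w. z < w) (tl x) = []" using setX unfolding X_def by (auto simp: filter_empty_conv)
      moreover have "filter (\<lambda>w. z \<le> w) y \<noteq> []" using z by (auto simp: filter_empty_conv)
      ultimately show False using TS1[OF px py ss z1] by simp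
    qed
    then show "z \<in> {1..N}" using z1 by simp
  qed
  have lX: "length X = (\<Sum>w\<in>{1..N}. A w)" unfolding A_def by (rule len_all[OF setX])
  have lY: "length y = (\<Sum>w\<in>{1..N}. B w)" unfolding B_def by (rule len_all[OF sety])
  have lXx: "length X = length x - 1" unfolding X_def by simp
  have gt: "length y < length x" using ss unfolding strict_shifted_def by simp
  define h0 where "h0 = m + r - 1"
  have mr: "1 \<le> m + r" using ln gt by linarith
  have h0e: "h0 + length y + r = length X" unfolding h0_def using ln mr lXx by arith
  define g where "g = gb A B h0"
  define f where "f = fb A B h0"
  have st: "\<forall>v. 1 \<le> v \<and> v \<le> N \<longrightarrow> stp (A v) (B v) (f v) (g v) (g (v - 1))"
    unfolding f_def g_def using gb_stp by blast
  have g0: "g 0 = h0" unfolding g_def by simp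
  have thr: "(\<Sum>w\<in>{1..v}. A w) + (\<Sum>w\<in>{1..N}. B w) \<le> (\<Sum>w\<in>{1..N}. A w) + (\<Sum>w\<in>{1..v-1}. B w)"
    if v: "1 \<le> v" "v \<le> N" for v
    using TS1[OF px py ss v(1)] LT[OF setX sety v(1)] unfolding A_def B_def X_def by simp
  have Fle: "v \<le> N \<Longrightarrow> (\<Sum>w\<in>{1..v}. f w) \<le> r" for v
  proof (induction v)
    case 0 then show ?case by simp
  next
    case (Suc w)
    have s: "stp (A (Suc w)) (B (Suc w)) (f (Suc w)) (g (Suc w)) (g w)"
      using st Suc.prems by (metis diff_Suc_1 le_add1 plus_1_eq_Suc)
    show ?case
    proof (cases "f (Suc w) = 0")
      case True then show ?thesis using Suc by simp
    next
      case False
      then have gs: "g (Suc w) = B (Suc w)" using s unfolding stp_def by auto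
      have i: "g (Suc w) + (\<Sum>w\<in>{1..Suc w}. A w) = g 0 + (\<Sum>w\<in>{1..Suc w}. B w) + (\<Sum>w\<in>{1..Suc w}. f w)"
        using ident[OF st Suc.prems] .
      have t: "(\<Sum>w\<in>{1..Suc w}. B w) = (\<Sum>w\<in>{1..w}. B w) + B (Suc w)" by simp
      have th: "(\<Sum>w\<in>{1..Suc w}. A w) + (\<Sum>w\<in>{1..N}. B w) \<le> (\<Sum>w\<in>{1..N}. A w) + (\<Sum>w\<in>{1..w}. B w)"
        using thr[of "Suc w"] Suc.prems by simp
      show ?thesis using i t th gs g0 h0e lX lY by linarith
    qed
  qed
  have iN: "g N + (\<Sum>w\<in>{1..N}. A w) = g 0 + (\<Sum>w\<in>{1..N}. B w) + (\<Sum>w\<in>{1..N}. f w)"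
    using ident[OF st le_refl] .
  have FN: "(\<Sum>w\<in>{1..N}. f w) = r" and gN: "g N = 0"
    using iN Fle[OF le_refl] g0 h0e lX lY by linarith+
  define a where "a = (\<lambda>v. A v - f v)"
  define b where "b = (\<lambda>v. B v + f v)"
  have fwf: "\<And>v. 1 \<le> v \<Longrightarrow> v \<le> N \<Longrightarrow> fw a b N 0 v = f v"
    using fw_from_stp[OF st] gN unfolding a_def b_def by metis
  have fA: "f v \<le> A v" if "1 \<le> v" "v \<le> N" for v
    using st that unfolding stp_def by fastforce
  define al where "al = N # mk a N"
  define be where "be = mk b N"
  have N1: "1 \<le> N" using pf(6) unfolding N_def .
  have pal: "is_partition al"
    unfolding al_def is_partition_def using sorted_mk[of a N] set_mk[of a N] N1 by auto
  have pbe: "is_partition be"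
    unfolding be_def is_partition_def using sorted_mk[of b N] set_mk[of b N] by auto
  have neal: "al \<noteq> []" and hal: "hd al = N" and tal: "tl al = mk a N" unfolding al_def by simp_all
  have bnd: "\<forall>z\<in>set be. z \<le> hd al" using set_mk[of b N] hal unfolding be_def by auto
  obtain x' y' where xy': "bal_map (al, be) = (x', y')" by (cases "bal_map (al, be)") auto
  note I = img[OF pal pbe neal bnd xy']
  define f' where "f' = fw (count (mset (tl al))) (count (mset be)) (hd al) 0"
  have f'e: "f' v = (if 1 \<le> v \<and> v \<le> N then f v else 0)" for v
  proof -
    have "f' = fw a b N 0" unfolding f'_def hal tal be_def
      by (rule fw_cong) (simp add: count_mk)
    then show ?thesis using fwf fw_zero[of v N a b 0] by auto
  qed
  have cX: "count (mset (tl x')) v = count (mset X) v" for v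
  proof (cases "1 \<le> v \<and> v \<le> N")
    case True
    then show ?thesis using I(7)[of v] f'e[of v] fA[of v] unfolding f'_def tal count_mk a_def A_def by simp
  next
    case False
    show ?thesis by (simp only: count_out[OF setX False] count_out[OF I(5)[unfolded hal] False])
  qed
  have tx: "tl x' = X"
    using sorted_desc_eq[of "tl x'" X] multiset_eqI[OF cX] I(1) pf(3) unfolding is_partition_def X_def
    by (metis I(3) list.collapse sorted_wrt.simps(2))
  have xe: "x' = x" using tx I(3) I(4) hal ne unfolding X_def N_def by (metis list.collapse)
  have cY: "count (mset y') v = count (mset y) v" for v
  proof (cases "1 \<le> v \<and> v \<le> N")
    case True
    then show ?thesis using I(8)[of v] f'e[of v] unfolding f'_def be_def count_mk b_def B_def by simp
  next
    case False
    show ?thesis by (simp only: count_out[OF sety False] count_out[OF I(6)[unfolded hal] False])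
  qed
  have ye: "y' = y"
    using sorted_desc_eq[of y' y] multiset_eqI[OF cY] I(2) py unfolding is_partition_def by blast
  have nb: "num_balanced al be = r"
  proof -
    have "num_balanced al be = (\<Sum>w\<in>{1..N}. f' w)" using I(10) hal unfolding f'_def by simp
    also have "\<dots> = (\<Sum>w\<in>{1..N}. f w)" by (intro sum.cong) (auto simp: f'e)
    finally show ?thesis using FN by simp
  qed
  have lsum: "length x' + length y' = length al + length be"
    using arg_cong[OF I(9), of size] by simp
  have lbe: "length y' + r = length be"
  proof -
    have "length y' = (\<Sum>w\<in>{1..N}. count (mset y') w)" using I(6) hal by (intro len_all) auto
    moreover have "length be = (\<Sum>w\<in>{1..N}. count (mset be) w)" using set_mk[of b N] unfolding be_def by (intro len_all)
    moreover have "(\<Sum>w\<in>{1..N}. count (mset y') w) + (\<Sum>w\<in>{1..N}. f' w) = (\<Sum>w\<in>{1..N}. count (mset be) w)"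
      using I(8) unfolding f'_def sum.distrib[symmetric] by simp
    moreover have "(\<Sum>w\<in>{1..N}. f' w) = r" using nb I(10) hal unfolding f'_def by simp
    ultimately show ?thesis by simp
  qed
  have "(al, be) \<in> setA r m n"
    unfolding setA_def using pal pbe neal bnd nb sumeq[OF I(9)] sm xe ye lsum lbe ln by auto
  then show ?thesis using xy' xe ye by blast
qed

theorem mainTheorem5:
  fixes r m n :: nat
  shows "bij_betw bal_map (setA r m n) (setB r m n)"
proof (rule bij_betw_imageI)
  show "inj_on bal_map (setA r m n)"
    unfolding inj_on_def using injA by (metis surj_pair)
  show "bal_map ` setA r m n = setB r m n"
  proof
    show "bal_map ` setA r m n \<subseteq> setB r m n"
    proof (rule image_subsetI)
      fix p assume "p \<in> setA r m n"
      then obtain al be where "p = (al, be)" "(al, be) \<in> setA r m n" by (cases p) auto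
      then show "bal_map p \<in> setB r m n" using into by simp
    qed
    show "setB r m n \<subseteq> bal_map ` setA r m n"
    proof
      fix p assume "p \<in> setB r m n"
      then obtain x y where p: "p = (x, y)" "(x, y) \<in> setB r m n" by (cases p) auto
      from surjB[OF p(2)] obtain q where "q \<in> setA r m n" "bal_map q = (x, y)" by blast
      then show "p \<in> bal_map ` setA r m n" using p(1) by (metis image_eqI)
    qed
  qed
qed

end
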